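(* In the setting described in the context, a bounded set $\mathcal{K}\subseteq\mathcal{H}$ is precompact if and only if $\{\mathcal{W}f(z): f\in\mathcal{K}\}$ is precompact in $H_1$ for each $z\in G$ and $$\lim_{N\to\infty}\sup_{f\in\mathcal{K}}\int_{G\setminus E_N}\|\mathcal{W}f(z)\|_{H_1}^2\,dz=0.$$
   Context: Setting: $H_1,H_2$ are separable Hilbert spaces, $G$ is a separable locally compact group with left Haar measure $dz$. $\{E_N\}_{N\in\mathbb{N}}$ is a sequence of open precompact subsets of $G$ with $E_N\subseteq E_{N+1}$, $E_N^{-1}=E_N$, $E_NE_N\subseteq E_{2N}$, $\bigcup_NE_N=G$. $\{\psi_z\}_{z\in G}\subseteq H_2$ is a bounded family, $z\mapsto\psi_z$ norm-continuous, forming a continuous Parseval frame: $\langle f,g\rangle_{H_2}=\int_G\langle f,\psi_z\rangle\langle\psi_z,g\rangle\,dz$ for all $f,g\in H_2$. $\mathcal{H}=H_1\widehat\otimes H_2$ is the Hilbert space tensor product (completion of the algebraic tensor product with $\langle a_1\otimes b_1,a_2\otimes b_2\rangle=\langle a_1,a_2\rangle\langle b_1,b_2\rangle$). For $f\in\mathcal{H}$, $g\in H_2$, $\langle f,g\rangle_{H_2}\in H_1$ is the continuous extension of $\sum c_na_n\otimes b_n\mapsto\sum c_na_n\langle b_n,g\rangle_{H_2}$. The wavelet transform $\mathcal{W}:\mathcal{H}\to L^2(G;H_1)$ is $\mathcal{W}f(z)=\langle f,\psi_z\rangle_{H_2}$. *)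

theory Defs
  imports "HOL-Analysis.Analysis"
begin

definition complex_hilbert_ip :: "(complex \<Rightarrow> 'a \<Rightarrow> 'a) \<Rightarrow> ('a::{real_normed_vector,complete_space} \<Rightarrow> 'a \<Rightarrow> complex) \<Rightarrow> bool" where
  "complex_hilbert_ip sc ip \<longleftrightarrow>
     (\<forall>r x. sc (complex_of_real r) x = r *\<^sub>R x) \<and>
     (\<forall>a b x. sc (a * b) x = sc a (sc b x)) \<and>
     (\<forall>a b x. sc (a + b) x = sc a x + sc b x) \<and>
     (\<forall>a x y. sc a (x + y) = sc a x + sc a y) \<and>
     (\<forall>x y z. ip (x + y) z = ip x z + ip y z) \<and>
     (\<forall>c x y. ip (sc c x) y = c * ip x y) \<and>
     (\<forall>x y. ip x y = cnj (ip y x)) \<and>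
     (\<forall>x. ip x x = complex_of_real ((norm x)\<^sup>2))"

definition separable_hilbert :: "(complex \<Rightarrow> 'a \<Rightarrow> 'a) \<Rightarrow> ('a::{real_normed_vector,complete_space} \<Rightarrow> 'a \<Rightarrow> complex) \<Rightarrow> bool" where
  "separable_hilbert sc ip \<longleftrightarrow> complex_hilbert_ip sc ip \<and> separable_space (euclidean :: 'a topology)"

text \<open>This is the
  completion of the algebraic tensor product, up to unitary isomorphism.\<close>
definition hilbert_tensor_product ::
  "(complex \<Rightarrow> 'a \<Rightarrow> 'a) \<Rightarrow> (complex \<Rightarrow> 'b \<Rightarrow> 'b) \<Rightarrow> (complex \<Rightarrow> 'h \<Rightarrow> 'h) \<Rightarrow> ('a \<Rightarrow> 'a \<Rightarrow> complex) \<Rightarrow> ('b \<Rightarrow> 'b \<Rightarrow> complex) \<Rightarrow> ('h::{real_normed_vector,complete_space} \<Rightarrow> 'h \<Rightarrow> complex)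
    \<Rightarrow> ('a::{real_normed_vector,complete_space} \<Rightarrow> 'b::{real_normed_vector,complete_space} \<Rightarrow> 'h) \<Rightarrow> bool" where
  "hilbert_tensor_product sc1 sc2 scH ip1 ip2 ipH tp \<longleftrightarrow>
     complex_hilbert_ip scH ipH \<and>
     (\<forall>a a' b. tp (a + a') b = tp a b + tp a' b) \<and>
     (\<forall>a b b'. tp a (b + b') = tp a b + tp a b') \<and>
     (\<forall>c a b. tp (sc1 c a) b = scH c (tp a b)) \<and>
     (\<forall>c a b. tp a (sc2 c b) = scH c (tp a b)) \<and>
     (\<forall>a1 a2 b1 b2. ipH (tp a1 b1) (tp a2 b2) = ip1 a1 a2 * ip2 b1 b2) \<and>
     closure (span (range (\<lambda>(a, b). tp a b))) = UNIV"

definition partial_ip ::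
  "(complex \<Rightarrow> 'a::real_normed_vector \<Rightarrow> 'a) \<Rightarrow> ('b \<Rightarrow> 'b \<Rightarrow> complex) \<Rightarrow> ('a \<Rightarrow> 'b \<Rightarrow> 'h::real_normed_vector) \<Rightarrow> 'h \<Rightarrow> 'b \<Rightarrow> 'a" where
  "partial_ip sc1 ip2 tp f g =
     (THE L :: 'h \<Rightarrow> 'a. bounded_linear L \<and> (\<forall>a b. L (tp a b) = sc1 (ip2 b g) a)) f"

definition wavelet_transform ::
  "(complex \<Rightarrow> 'a::real_normed_vector \<Rightarrow> 'a) \<Rightarrow> ('b \<Rightarrow> 'b \<Rightarrow> complex) \<Rightarrow> ('a \<Rightarrow> 'b \<Rightarrow> 'h::real_normed_vector) \<Rightarrow> ('g \<Rightarrow> 'b) \<Rightarrow> 'h \<Rightarrow> 'g \<Rightarrow> 'a" where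
  "wavelet_transform sc1 ip2 tp \<psi> f z = partial_ip sc1 ip2 tp f (\<psi> z)"

text \<open>Left Haar measure on a locally compact group (written additively, not
  necessarily commutative): a nonzero left-invariant Radon measure on the Borel sets.\<close>
definition left_haar_measure :: "'g::topological_group_add measure \<Rightarrow> bool" where
  "left_haar_measure \<mu> \<longleftrightarrow>
     sets \<mu> = sets borel \<and>
     (\<forall>g A. A \<in> sets borel \<longrightarrow> emeasure \<mu> ((\<lambda>x. g + x) ` A) = emeasure \<mu> A) \<and>
     (\<forall>K. compact K \<longrightarrow> emeasure \<mu> K < \<infinity>) \<and>
     (\<forall>A \<in> sets borel. emeasure \<mu> A = (INF U \<in> {U. open U \<and> A \<subseteq> U}. emeasure \<mu> U)) \<and>
     (\<forall>U. open U \<longrightarrow> emeasure \<mu> U = (SUP K \<in> {K. compact K \<and> K \<subseteq> U}. emeasure \<mu> K)) \<and>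
     emeasure \<mu> UNIV \<noteq> 0"

definition continuous_parseval_frame ::
  "('b \<Rightarrow> 'b \<Rightarrow> complex) \<Rightarrow> 'g measure \<Rightarrow> ('g \<Rightarrow> 'b) \<Rightarrow> bool" where
  "continuous_parseval_frame ip \<mu> \<psi> \<longleftrightarrow>
     (\<forall>f g. integrable \<mu> (\<lambda>z. ip f (\<psi> z) * ip (\<psi> z) g) \<and>
            ip f g = (\<integral>z. ip f (\<psi> z) * ip (\<psi> z) g \<partial>\<mu>))"

end

theory Submission
  imports Defs
begin

locale chil =
  fixes sc :: "complex \<Rightarrow> 'a::{real_normed_vector,complete_space} \<Rightarrow> 'a"
    and ip :: "'a \<Rightarrow> 'a \<Rightarrow> complex"
  assumes chip: "complex_hilbert_ip sc ip"
begin

lemma sc_real: "sc (complex_of_real r) x = r *\<^sub>R x"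
  and sc_mult: "sc (a * b) x = sc a (sc b x)"
  and ip_add_left: "ip (x + y) z = ip x z + ip y z"
  and ip_sc_left: "ip (sc c x) y = c * ip x y"
  and ip_cnj: "ip x y = cnj (ip y x)"
  and ip_self: "ip x x = complex_of_real ((norm x)\<^sup>2)"
  using chip unfolding complex_hilbert_ip_def by blast+

lemma ip_zero_left[simp]: "ip 0 y = 0"
  using ip_add_left[of 0 0 y] by simp

lemma ip_zero_right[simp]: "ip y 0 = 0"
  using ip_cnj[of y 0] by simp

lemma ip_minus_left: "ip (- x) y = - ip x y"
  using ip_add_left[of x "-x" y] by (simp add: add_eq_0_iff)

lemma ip_diff_left: "ip (x - y) z = ip x z - ip y z"
  using ip_add_left[of x "-y" z] ip_minus_left[of y z] by simp

lemma ip_add_right: "ip x (y + z) = ip x y + ip x z"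
  using ip_cnj[of x "y+z"] ip_add_left[of y z x] ip_cnj[of x y] ip_cnj[of x z] by simp

lemma ip_diff_right: "ip x (y - z) = ip x y - ip x z"
  using ip_cnj[of x "y-z"] ip_diff_left[of y z x] ip_cnj[of x y] ip_cnj[of x z] by simp

lemma ip_sc_right: "ip x (sc c y) = cnj c * ip x y"
  using ip_cnj[of x "sc c y"] ip_sc_left[of c y x] ip_cnj[of y x] by simp

lemma ip_scaleR_left: "ip (r *\<^sub>R x) y = complex_of_real r * ip x y"
  using ip_sc_left[of "complex_of_real r" x y] sc_real by simp

lemma ip_scaleR_right: "ip x (r *\<^sub>R y) = complex_of_real r * ip x y"
  using ip_sc_right[of x "complex_of_real r" y] sc_real by simp

lemma ip_sum_left: "ip (\<Sum>i\<in>I. f i) y = (\<Sum>i\<in>I. ip (f i) y)"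
  by (induction I rule: infinite_finite_induct) (auto simp: ip_add_left)

lemma ip_sum_right: "ip y (\<Sum>i\<in>I. f i) = (\<Sum>i\<in>I. ip y (f i))"
  by (induction I rule: infinite_finite_induct) (auto simp: ip_add_right)

lemma sc_add_right: "sc c (x + y) = sc c x + sc c y"
  using chip unfolding complex_hilbert_ip_def by blast

lemma sc_zero[simp]: "sc c 0 = 0"
  using sc_add_right[of c 0 0] by simp

lemma sc_diff_right: "sc c (x - y) = sc c x - sc c y"
proof -
  have "sc c x = sc c (x - y) + sc c y" using sc_add_right[of c "x-y" y] by simp
  then show ?thesis by (simp add: algebra_simps)
qed

lemma sc_sum_right: "sc c (\<Sum>i\<in>I. f i) = (\<Sum>i\<in>I. sc c (f i))"
  by (induction I rule: infinite_finite_induct) (auto simp: sc_add_right)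

lemma Re_ip_self: "Re (ip x x) = (norm x)\<^sup>2"
  using ip_self by simp

lemma ip_eq_zero_imp: "(\<And>a. ip v a = 0) \<Longrightarrow> v = 0"
  using ip_self[of v] by (metis norm_eq_zero of_real_eq_0_iff power_eq_0_iff)

lemma Re_ip_le: "Re (ip x y) \<le> norm x * norm y"
proof -
  have e: "ip (x+y) (x+y) = ip x x + ip y y + (ip x y + cnj (ip x y))"
    using ip_cnj[of y x] by (simp add: ip_add_left ip_add_right algebra_simps)
  have "Re (ip (x+y) (x+y)) = Re (ip x x) + Re (ip y y) + 2 * Re (ip x y)"
    unfolding e by simp
  then have "(norm (x+y))\<^sup>2 = (norm x)\<^sup>2 + (norm y)\<^sup>2 + 2 * Re (ip x y)"
    by (simp only: Re_ip_self)
  moreover have "(norm (x+y))\<^sup>2 \<le> (norm x + norm y)\<^sup>2"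
    by (simp add: norm_triangle_ineq power_mono)
  ultimately show ?thesis by (simp add: power2_eq_square algebra_simps)
qed

lemma norm_sc: "norm (sc c x) = cmod c * norm x"
proof -
  have "ip (sc c x) (sc c x) = (c * cnj c) * ip x x"
    by (simp add: ip_sc_left ip_sc_right)
  then have "complex_of_real ((norm (sc c x))\<^sup>2) = complex_of_real ((cmod c)\<^sup>2) * complex_of_real ((norm x)\<^sup>2)"
    by (simp only: ip_self complex_norm_square)
  then have "(norm (sc c x))\<^sup>2 = (cmod c * norm x)\<^sup>2"
    by (simp only: of_real_mult[symmetric] of_real_eq_iff power_mult_distrib)
  then show ?thesis by (rule power2_eq_imp_eq) auto
qed

lemma cs: "cmod (ip x y) \<le> norm x * norm y"
proof (cases "ip x y = 0")
  case True then show ?thesis by simp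
next
  case False
  define c where "c = cnj (ip x y) / cmod (ip x y)"
  have cm: "cmod c = 1" using False by (simp add: c_def norm_divide)
  have "c * ip x y = (ip x y * cnj (ip x y)) / complex_of_real (cmod (ip x y))"
    by (simp add: c_def mult.commute)
  also have "\<dots> = complex_of_real ((cmod (ip x y))\<^sup>2) / complex_of_real (cmod (ip x y))"
    by (simp only: complex_norm_square)
  also have "\<dots> = complex_of_real (cmod (ip x y))"
    using False by (simp add: power2_eq_square)
  finally have "c * ip x y = complex_of_real (cmod (ip x y))" .
  then have "cmod (ip x y) = Re (ip (sc c x) y)" by (simp add: ip_sc_left)
  also have "\<dots> \<le> norm (sc c x) * norm y" by (rule Re_ip_le)
  also have "\<dots> = norm x * norm y" using cm by (simp add: norm_sc)
  finally show ?thesis .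
qed

lemma ip_cont_left: "cmod (ip x a - ip y a) \<le> norm (x - y) * norm a"
  using cs[of "x-y" a] by (simp add: ip_diff_left)

end

context chil begin
lemma ip_bl_left: "bounded_linear (\<lambda>x. ip x a)"
proof (rule bounded_linear_intro[where K="norm a"])
  fix x y show "ip (x + y) a = ip x a + ip y a" by (rule ip_add_left)
next
  fix r x show "ip (r *\<^sub>R x) a = r *\<^sub>R ip x a" by (simp add: ip_scaleR_left scaleR_conv_of_real)
next
  fix x show "norm (ip x a) \<le> norm x * norm a" by (rule cs)
qed
end

locale ts =
  fixes sc1 :: "complex \<Rightarrow> 'a::{real_normed_vector,complete_space} \<Rightarrow> 'a"
    and sc2 :: "complex \<Rightarrow> 'b::{real_normed_vector,complete_space} \<Rightarrow> 'b"
    and scH :: "complex \<Rightarrow> 'h::{real_normed_vector,complete_space} \<Rightarrow> 'h"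
    and ip1 :: "'a \<Rightarrow> 'a \<Rightarrow> complex"
    and ip2 :: "'b \<Rightarrow> 'b \<Rightarrow> complex"
    and ipH :: "'h \<Rightarrow> 'h \<Rightarrow> complex"
    and tp :: "'a \<Rightarrow> 'b \<Rightarrow> 'h"
  assumes c1: "complex_hilbert_ip sc1 ip1"
    and c2: "complex_hilbert_ip sc2 ip2"
    and tens: "hilbert_tensor_product sc1 sc2 scH ip1 ip2 ipH tp"
begin

sublocale H1: chil sc1 ip1 by (rule chil.intro, rule c1)
sublocale H2: chil sc2 ip2 by (rule chil.intro, rule c2)
sublocale HH: chil scH ipH using tens by (auto intro!: chil.intro simp: hilbert_tensor_product_def)

lemma tp_add_left: "tp (a + a') b = tp a b + tp a' b"
  and tp_add_right: "tp a (b + b') = tp a b + tp a b'"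
  and tp_sc_left: "tp (sc1 c a) b = scH c (tp a b)"
  and tp_sc_right: "tp a (sc2 c b) = scH c (tp a b)"
  and tp_ip: "ipH (tp a1 b1) (tp a2 b2) = ip1 a1 a2 * ip2 b1 b2"
  and tp_dense: "closure (span (range (\<lambda>(a, b). tp a b))) = UNIV"
  using tens unfolding hilbert_tensor_product_def by blast+

lemma tp_zero_right[simp]: "tp a 0 = 0"
  using tp_add_right[of a 0 0] by simp

lemma tp_diff_right: "tp a (b - b') = tp a b - tp a b'"
  using tp_add_right[of a "b - b'" b'] by (simp add: algebra_simps)

lemma tp_scaleR_left: "tp (r *\<^sub>R a) b = r *\<^sub>R tp a b"
  using tp_sc_left[of "complex_of_real r" a b] by (simp add: H1.sc_real HH.sc_real)

lemma tp_scaleR_right: "tp a (r *\<^sub>R b) = r *\<^sub>R tp a b"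
  using tp_sc_right[of a "complex_of_real r" b] by (simp add: H2.sc_real HH.sc_real)

definition pchar :: "'b \<Rightarrow> 'h \<Rightarrow> 'a \<Rightarrow> bool" where
  "pchar g f v \<longleftrightarrow> (\<forall>a. ip1 v a = ipH f (tp a g))"

lemma pchar_unique: "pchar g f v \<Longrightarrow> pchar g f v' \<Longrightarrow> v = v'"
proof -
  assume "pchar g f v" "pchar g f v'"
  then have "\<And>a. ip1 (v - v') a = 0" by (simp add: pchar_def H1.ip_diff_left)
  then have "v - v' = 0" by (rule H1.ip_eq_zero_imp)
  then show "v = v'" by simp
qed

lemma pchar_add: "pchar g f v \<Longrightarrow> pchar g f' v' \<Longrightarrow> pchar g (f + f') (v + v')"
  by (simp add: pchar_def H1.ip_add_left HH.ip_add_left)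

lemma pchar_diff: "pchar g f v \<Longrightarrow> pchar g f' v' \<Longrightarrow> pchar g (f - f') (v - v')"
  by (simp add: pchar_def H1.ip_diff_left HH.ip_diff_left)

lemma pchar_scaleR: "pchar g f v \<Longrightarrow> pchar g (r *\<^sub>R f) (r *\<^sub>R v)"
  by (simp add: pchar_def H1.ip_scaleR_left HH.ip_scaleR_left)

lemma pchar_zero: "pchar g 0 0"
  by (simp add: pchar_def)

lemma pchar_tp: "pchar g (tp a b) (sc1 (ip2 b g) a)"
  by (simp add: pchar_def H1.ip_sc_left tp_ip)

lemma pchar_bound:
  assumes "pchar g f v" shows "norm v \<le> norm f * norm g"
proof (cases "v = 0")
  case True then show ?thesis by simp
next
  case False
  have "(norm v)\<^sup>2 = Re (ip1 v v)" by (simp add: H1.Re_ip_self)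
  also have "\<dots> = Re (ipH f (tp v g))" using assms by (simp add: pchar_def)
  also have "\<dots> \<le> cmod (ipH f (tp v g))" by (rule complex_Re_le_cmod)
  also have "\<dots> \<le> norm f * norm (tp v g)" by (rule HH.cs)
  also have "norm (tp v g) = norm v * norm g"
  proof -
    have "(norm (tp v g))\<^sup>2 = (norm v * norm g)\<^sup>2"
      using HH.Re_ip_self[of "tp v g"] H1.Re_ip_self[of v] H2.Re_ip_self[of g]
      by (simp add: tp_ip power_mult_distrib H1.ip_self H2.ip_self)
    then show ?thesis by (rule power2_eq_imp_eq) auto
  qed
  finally have "norm v * norm v \<le> (norm f * norm g) * norm v"
    by (simp add: power2_eq_square algebra_simps)
  then show ?thesis using False by simp
qed

lemma norm_tp: "norm (tp a b) = norm a * norm b"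
proof -
  have "(norm (tp a b))\<^sup>2 = (norm a * norm b)\<^sup>2"
    using HH.Re_ip_self[of "tp a b"] H1.Re_ip_self[of a] H2.Re_ip_self[of b]
    by (simp add: tp_ip power_mult_distrib H1.ip_self H2.ip_self)
  then show ?thesis by (rule power2_eq_imp_eq) auto
qed

lemma pchar_span:
  assumes "f \<in> span (range (\<lambda>(a, b). tp a b))" shows "\<exists>v. pchar g f v"
proof -
  have "span (range (\<lambda>(a, b). tp a b)) \<subseteq> {f. \<exists>v. pchar g f v}"
  proof (rule span_minimal)
    show "range (\<lambda>(a, b). tp a b) \<subseteq> {f. \<exists>v. pchar g f v}" using pchar_tp by auto
    show "subspace {f. \<exists>v. pchar g f v}" unfolding subspace_def
      using pchar_zero pchar_add pchar_scaleR by blast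
  qed
  then show ?thesis using assms by blast
qed

lemma pchar_exists: "\<exists>v. pchar g f v"
proof -
  have "f \<in> closure (span (range (\<lambda>(a, b). tp a b)))" by (simp add: tp_dense)
  then obtain F where F: "\<And>n. F n \<in> span (range (\<lambda>(a, b). tp a b))" "F \<longlonglongrightarrow> f"
    unfolding closure_sequential by blast
  have "\<forall>n. \<exists>v. pchar g (F n) v" using pchar_span F(1) by blast
  then obtain V where V: "\<And>n. pchar g (F n) (V n)" by metis
  have "Cauchy V"
  proof (rule CauchyI)
    fix e :: real assume e: "0 < e"
    have "Cauchy F" using F(2) by (rule LIMSEQ_imp_Cauchy)
    then obtain M where M: "\<forall>m\<ge>M. \<forall>n\<ge>M. norm (F m - F n) < e / (norm g + 1)"
      using e by (metis CauchyD divide_pos_pos norm_ge_zero add_nonneg_pos zero_less_one)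
    show "\<exists>M. \<forall>m\<ge>M. \<forall>n\<ge>M. norm (V m - V n) < e"
    proof (intro exI allI impI)
      fix m n assume "M \<le> m" "M \<le> n"
      have "norm (V m - V n) \<le> norm (F m - F n) * norm g"
        by (rule pchar_bound, rule pchar_diff[OF V V])
      also have "\<dots> \<le> norm (F m - F n) * (norm g + 1)" by (simp add: mult_left_mono)
      also have "\<dots> < e" using M \<open>M \<le> m\<close> \<open>M \<le> n\<close>
        by (simp add: pos_less_divide_eq add_nonneg_pos)
      finally show "norm (V m - V n) < e" .
    qed
  qed
  then obtain v where v: "V \<longlonglongrightarrow> v" by (auto simp: Cauchy_convergent_iff convergent_def)
  have "pchar g f v" unfolding pchar_def
  proof
    fix a
    have "(\<lambda>n. ip1 (V n) a) \<longlonglongrightarrow> ip1 v a"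
      using bounded_linear.tendsto[OF H1.ip_bl_left v] .
    moreover have "(\<lambda>n. ipH (F n) (tp a g)) \<longlonglongrightarrow> ipH f (tp a g)"
      using bounded_linear.tendsto[OF HH.ip_bl_left F(2)] .
    moreover have "\<And>n. ip1 (V n) a = ipH (F n) (tp a g)" using V by (simp add: pchar_def)
    ultimately show "ip1 v a = ipH f (tp a g)" using LIMSEQ_unique by fastforce
  qed
  then show ?thesis by blast
qed

definition pdef :: "'b \<Rightarrow> 'h \<Rightarrow> 'a" where
  "pdef g f = (THE v. pchar g f v)"

lemma pdef_char: "pchar g f (pdef g f)"
  unfolding pdef_def using pchar_exists pchar_unique by (metis theI)

lemma pdef_eqI: "pchar g f v \<Longrightarrow> pdef g f = v"
  using pdef_char pchar_unique by blast

lemma pdef_bl: "bounded_linear (pdef g)"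
proof (rule bounded_linear_intro[where K="norm g"])
  fix x y show "pdef g (x + y) = pdef g x + pdef g y"
    by (rule pdef_eqI, rule pchar_add; rule pdef_char)
next
  fix r x show "pdef g (r *\<^sub>R x) = r *\<^sub>R pdef g x"
    by (rule pdef_eqI, rule pchar_scaleR, rule pdef_char)
next
  fix x show "norm (pdef g x) \<le> norm x * norm g"
    by (rule pchar_bound, rule pdef_char)
qed

lemma pdef_tp: "pdef g (tp a b) = sc1 (ip2 b g) a"
  by (rule pdef_eqI, rule pchar_tp)

lemma partial_ip_eq: "partial_ip sc1 ip2 tp f g = pdef g f"
proof -
  have "(THE L :: 'h \<Rightarrow> 'a. bounded_linear L \<and> (\<forall>a b. L (tp a b) = sc1 (ip2 b g) a)) = pdef g"
  proof (rule the_equality)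
    show "bounded_linear (pdef g) \<and> (\<forall>a b. pdef g (tp a b) = sc1 (ip2 b g) a)"
      using pdef_bl pdef_tp by blast
  next
    fix L :: "'h \<Rightarrow> 'a" assume L: "bounded_linear L \<and> (\<forall>a b. L (tp a b) = sc1 (ip2 b g) a)"
    have lin: "linear L" "linear (pdef g)" using L pdef_bl bounded_linear.linear by blast+
    have sp: "\<And>x. x \<in> span (range (\<lambda>(a, b). tp a b)) \<Longrightarrow> L x = pdef g x"
    proof -
      fix x assume "x \<in> span (range (\<lambda>(a, b). tp a b))"
      moreover have "\<And>b. b \<in> range (\<lambda>(a, b). tp a b) \<Longrightarrow> L b = pdef g b"
        using L pdef_tp by auto
      ultimately show "L x = pdef g x"
        using linear_eq_on_span[OF lin] by blast
    qed
    have cl: "closed {x. L x = pdef g x}"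
      by (rule closed_Collect_eq; rule linear_continuous_on; use L pdef_bl in blast)
    have "closure (span (range (\<lambda>(a, b). tp a b))) \<subseteq> {x. L x = pdef g x}"
      by (rule closure_minimal[OF _ cl]) (use sp in blast)
    then show "L = pdef g" using tp_dense by auto
  qed
  then show ?thesis unfolding partial_ip_def by simp
qed

lemma P_char: "ip1 (partial_ip sc1 ip2 tp f g) a = ipH f (tp a g)"
  using pdef_char[of g f] unfolding partial_ip_eq pchar_def by blast

lemma P_bl: "bounded_linear (\<lambda>f. partial_ip sc1 ip2 tp f g)"
  unfolding partial_ip_eq using pdef_bl by simp

lemma P_bound: "norm (partial_ip sc1 ip2 tp f g) \<le> norm f * norm g"
  unfolding partial_ip_eq by (rule pchar_bound, rule pdef_char)

lemma P_diff_g: "partial_ip sc1 ip2 tp f g - partial_ip sc1 ip2 tp f g' = partial_ip sc1 ip2 tp f (g - g')"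
  unfolding partial_ip_eq
  by (rule pdef_eqI[symmetric]) (simp add: pchar_def H1.ip_diff_left tp_diff_right HH.ip_diff_right pdef_char[unfolded pchar_def])

lemma P_diff_f: "partial_ip sc1 ip2 tp f g - partial_ip sc1 ip2 tp f' g = partial_ip sc1 ip2 tp (f - f') g"
  using linear_diff[OF bounded_linear.linear[OF P_bl]] by metis

end

lemma sq_tri2: "(norm ((a::'x::real_normed_vector) + b))\<^sup>2 \<le> 2 * (norm a)\<^sup>2 + 2 * (norm b)\<^sup>2"
proof -
  have "(norm (a+b))\<^sup>2 \<le> (norm a + norm b)\<^sup>2" by (simp add: norm_triangle_ineq power_mono)
  also have "\<dots> \<le> 2 * (norm a)\<^sup>2 + 2 * (norm b)\<^sup>2"
    using sum_squares_bound[of "norm a" "norm b"] by (simp add: power2_eq_square algebra_simps)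
  finally show ?thesis .
qed

lemma ennsq_tri2: "ennreal ((norm ((a::'x::real_normed_vector) + b))\<^sup>2) \<le> 2 * ennreal ((norm a)\<^sup>2) + 2 * ennreal ((norm b)\<^sup>2)"
proof -
  have "ennreal ((norm (a + b))\<^sup>2) \<le> ennreal (2 * (norm a)\<^sup>2 + 2 * (norm b)\<^sup>2)"
    using sq_tri2 ennreal_leI by blast
  also have "\<dots> = 2 * ennreal ((norm a)\<^sup>2) + 2 * ennreal ((norm b)\<^sup>2)"
    by (simp add: ennreal_plus ennreal_mult)
  finally show ?thesis .
qed

locale ws = ts sc1 sc2 scH ip1 ip2 ipH tp
  for sc1 :: "complex \<Rightarrow> 'a::{real_normed_vector,complete_space} \<Rightarrow> 'a"
    and sc2 :: "complex \<Rightarrow> 'b::{real_normed_vector,complete_space} \<Rightarrow> 'b"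
    and scH :: "complex \<Rightarrow> 'h::{real_normed_vector,complete_space} \<Rightarrow> 'h"
    and ip1 ip2 ipH tp +
  fixes \<mu> :: "'g::topological_space measure" and \<psi> :: "'g \<Rightarrow> 'b"
  assumes sets_mu: "sets \<mu> = sets borel"
    and psi_cont: "continuous_on UNIV \<psi>"
    and frame: "continuous_parseval_frame ip2 \<mu> \<psi>"
begin

definition W :: "'h \<Rightarrow> 'g \<Rightarrow> 'a" where
  "W f z = partial_ip sc1 ip2 tp f (\<psi> z)"

lemma W_eq: "wavelet_transform sc1 ip2 tp \<psi> f z = W f z"
  by (simp add: wavelet_transform_def W_def)

lemma P_bl_g: "bounded_linear (\<lambda>g. partial_ip sc1 ip2 tp f g)"
  unfolding partial_ip_eq
proof (rule bounded_linear_intro[where K="norm f"])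
  fix x y show "pdef (x + y) f = pdef x f + pdef y f"
    by (rule pdef_eqI) (simp add: pchar_def H1.ip_add_left tp_add_right HH.ip_add_right pdef_char[unfolded pchar_def])
next
  fix r x show "pdef (r *\<^sub>R x) f = r *\<^sub>R pdef x f"
    by (rule pdef_eqI) (simp add: pchar_def H1.ip_scaleR_left tp_scaleR_right HH.ip_scaleR_right pdef_char[unfolded pchar_def])
next
  fix x show "norm (pdef x f) \<le> norm x * norm f"
    using pchar_bound[OF pdef_char, of x f] by (simp add: mult.commute)
qed

lemma W_cont: "continuous_on UNIV (W f)"
proof -
  have "continuous_on UNIV (\<lambda>g. partial_ip sc1 ip2 tp f g)"
    by (rule linear_continuous_on[OF P_bl_g])
  then show ?thesis unfolding W_def
    by (rule continuous_on_compose2[OF _ psi_cont]) simp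
qed

lemma W_meas: "(\<lambda>z. ennreal ((norm (W f z))\<^sup>2)) \<in> borel_measurable \<mu>"
proof -
  have "W f \<in> borel_measurable borel" by (rule borel_measurable_continuous_onI[OF W_cont])
  then have m: "W f \<in> borel_measurable \<mu>" unfolding measurable_cong_sets[OF sets_mu refl] .
  have "continuous_on UNIV (\<lambda>y::'a. (norm y)\<^sup>2)"
    by (intro continuous_intros)
  then have "(\<lambda>z. (norm (W f z))\<^sup>2) \<in> borel_measurable \<mu>" using borel_measurable_continuous_on[OF _ m] by blast
  then show ?thesis using measurable_compose[OF _ measurable_ennreal] by blast
qed

lemma nn_integral_add2:
  "(\<integral>\<^sup>+ z. 2 * ennreal ((norm (W f z))\<^sup>2) + 2 * ennreal ((norm (W g z))\<^sup>2) \<partial>\<mu>)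
   = 2 * (\<integral>\<^sup>+ z. ennreal ((norm (W f z))\<^sup>2) \<partial>\<mu>) + 2 * (\<integral>\<^sup>+ z. ennreal ((norm (W g z))\<^sup>2) \<partial>\<mu>)"
proof -
  have m: "(\<lambda>z. 2 * ennreal ((norm (W h z))\<^sup>2)) \<in> borel_measurable \<mu>" for h
    by (rule borel_measurable_times_ennreal[OF borel_measurable_const W_meas])
  show ?thesis by (simp add: nn_integral_add[OF m m] nn_integral_cmult[OF W_meas])
qed

lemma W_diff: "W f z - W f' z = W (f - f') z"
  unfolding W_def by (rule P_diff_f)

lemma W_tendsto: "F \<longlonglongrightarrow> f \<Longrightarrow> (\<lambda>n. W (F n) z) \<longlonglongrightarrow> W f z"
  unfolding W_def by (rule bounded_linear.tendsto[OF P_bl])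

lemma frame_int: "integrable \<mu> (\<lambda>z. ip2 f (\<psi> z) * ip2 (\<psi> z) g)"
  and frame_eq: "ip2 f g = (\<integral>z. ip2 f (\<psi> z) * ip2 (\<psi> z) g \<partial>\<mu>)"
  using frame unfolding continuous_parseval_frame_def by blast+

lemma span_rep:
  assumes "F \<in> span (range (\<lambda>(a, b). tp a b))"
  shows "\<exists>(T::'h set) A B. finite T \<and> F = (\<Sum>i\<in>T. tp (A i) (B i))"
proof -
  obtain t r where t: "finite t" "t \<subseteq> range (\<lambda>(a, b). tp a b)" "F = (\<Sum>a\<in>t. r a *\<^sub>R a)"
    using assms unfolding span_explicit by (auto simp only: mem_Collect_eq)
  have "\<forall>x\<in>t. \<exists>p. x = tp (fst p) (snd p)"
  proof
    fix x assume "x \<in> t"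
    then obtain q where "x = (\<lambda>(a, b). tp a b) q" using t(2) by blast
    then show "\<exists>p. x = tp (fst p) (snd p)" by (cases q) auto
  qed
  then obtain p where p: "\<And>x. x \<in> t \<Longrightarrow> x = tp (fst (p x)) (snd (p x))" by metis
  have "F = (\<Sum>x\<in>t. tp (r x *\<^sub>R fst (p x)) (snd (p x)))"
    unfolding t(3)
  proof (rule sum.cong[OF refl])
    fix x assume "x \<in> t"
    then have "r x *\<^sub>R x = r x *\<^sub>R tp (fst (p x)) (snd (p x))" using p by metis
    then show "r x *\<^sub>R x = tp (r x *\<^sub>R fst (p x)) (snd (p x))" by (simp add: tp_scaleR_left)
  qed
  note Fe = this
  show ?thesis
  proof (intro exI conjI)
    show "finite t" by (rule t(1))
    show "F = (\<Sum>x\<in>t. tp (r x *\<^sub>R fst (p x)) (snd (p x)))" by (rule Fe)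
  qed
qed

lemma iso_span:
  assumes "F \<in> span (range (\<lambda>(a, b). tp a b))"
  shows "(\<integral>\<^sup>+ z. ennreal ((norm (W F z))\<^sup>2) \<partial>\<mu>) = ennreal ((norm F)\<^sup>2)"
proof -
  obtain T :: "'h set" and A B where T: "finite T" and F: "F = (\<Sum>i\<in>T. tp (A i) (B i))"
    using span_rep[OF assms] by blast
  define h where "h z = (\<Sum>i\<in>T. \<Sum>j\<in>T. (ip2 (B i) (\<psi> z) * ip2 (\<psi> z) (B j)) * ip1 (A i) (A j))" for z
  have pt: "ip1 (W F z) (W F z) = h z" for z
  proof -
    let ?v = "W F z" and ?g = "\<psi> z"
    have "ip1 ?v ?v = ipH F (tp ?v ?g)" unfolding W_def by (rule P_char)
    also have "\<dots> = (\<Sum>i\<in>T. ip1 (A i) ?v * ip2 (B i) ?g)"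
      unfolding F by (simp add: HH.ip_sum_left tp_ip)
    also have "\<dots> = (\<Sum>i\<in>T. (\<Sum>j\<in>T. ip1 (A i) (A j) * ip2 ?g (B j)) * ip2 (B i) ?g)"
    proof (rule sum.cong[OF refl])
      fix i assume "i \<in> T"
      have "ip1 (A i) ?v = cnj (ip1 ?v (A i))" by (rule H1.ip_cnj)
      also have "ip1 ?v (A i) = ipH F (tp (A i) ?g)" unfolding W_def by (rule P_char)
      also have "\<dots> = (\<Sum>j\<in>T. ip1 (A j) (A i) * ip2 (B j) ?g)"
        unfolding F by (simp add: HH.ip_sum_left tp_ip)
      finally have e1: "ip1 (A i) ?v = cnj (\<Sum>j\<in>T. ip1 (A j) (A i) * ip2 (B j) ?g)" .
      have e2: "cnj (ip1 (A j) (A i) * ip2 (B j) ?g) = ip1 (A i) (A j) * ip2 ?g (B j)" for j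
        using H1.ip_cnj[of "A i" "A j"] H2.ip_cnj[of ?g "B j"] by simp
      have "ip1 (A i) ?v = (\<Sum>j\<in>T. ip1 (A i) (A j) * ip2 ?g (B j))"
        unfolding e1 cnj_sum e2 ..
      then show "ip1 (A i) ?v * ip2 (B i) ?g = (\<Sum>j\<in>T. ip1 (A i) (A j) * ip2 ?g (B j)) * ip2 (B i) ?g"
        by simp
    qed
    also have "\<dots> = h z" unfolding h_def sum_distrib_right
      by (intro sum.cong refl) (simp only: ac_simps)
    finally show ?thesis .
  qed
  have hint: "integrable \<mu> h" unfolding h_def
  proof (rule Bochner_Integration.integrable_sum)
    fix i assume "i \<in> T"
    show "integrable \<mu> (\<lambda>z. \<Sum>j\<in>T. ip2 (B i) (\<psi> z) * ip2 (\<psi> z) (B j) * ip1 (A i) (A j))"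
    proof (rule Bochner_Integration.integrable_sum)
      fix j assume "j \<in> T"
      show "integrable \<mu> (\<lambda>z. ip2 (B i) (\<psi> z) * ip2 (\<psi> z) (B j) * ip1 (A i) (A j))"
        by (rule Bochner_Integration.integrable_mult_left) (rule frame_int)
    qed
  qed
  have "integral\<^sup>L \<mu> h = (\<Sum>i\<in>T. \<Sum>j\<in>T. ip2 (B i) (B j) * ip1 (A i) (A j))"
    unfolding h_def
    by (simp add: Bochner_Integration.integral_sum frame_int frame_eq[symmetric])
  also have "\<dots> = ipH F F"
    unfolding F by (simp add: HH.ip_sum_left HH.ip_sum_right tp_ip mult.commute) (rule sum.swap)
  finally have ih: "integral\<^sup>L \<mu> h = ipH F F" .
  have nz: "(norm (W F z))\<^sup>2 = Re (h z)" for z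
    using H1.Re_ip_self[of "W F z"] pt[of z] by simp
  have "(\<integral>\<^sup>+ z. ennreal ((norm (W F z))\<^sup>2) \<partial>\<mu>) = (\<integral>\<^sup>+ z. ennreal (Re (h z)) \<partial>\<mu>)"
    by (simp add: nz)
  also have "\<dots> = ennreal (\<integral>z. Re (h z) \<partial>\<mu>)"
  proof (rule nn_integral_eq_integral)
    show "integrable \<mu> (\<lambda>z. Re (h z))" using hint by (rule integrable_Re)
    have "0 \<le> Re (h z)" for z using nz[of z] zero_le_power2[of "norm (W F z)"] by linarith
    then show "AE z in \<mu>. 0 \<le> Re (h z)" by (rule AE_I2)
  qed
  also have "(\<integral>z. Re (h z) \<partial>\<mu>) = Re (integral\<^sup>L \<mu> h)" using hint by simp
  also have "\<dots> = (norm F)\<^sup>2" using ih HH.Re_ip_self by simp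
  finally show ?thesis .
qed

lemma dense_seq: "\<exists>F. (\<forall>n. F n \<in> span (range (\<lambda>(a, b). tp a b))) \<and> F \<longlonglongrightarrow> f"
proof -
  have "f \<in> closure (span (range (\<lambda>(a, b). tp a b)))" by (simp add: tp_dense)
  then show ?thesis unfolding closure_sequential by blast
qed

lemma bessel: "(\<integral>\<^sup>+ z. ennreal ((norm (W f z))\<^sup>2) \<partial>\<mu>) \<le> ennreal ((norm f)\<^sup>2)"
proof -
  obtain F where F: "\<And>n. F n \<in> span (range (\<lambda>(a, b). tp a b))" "F \<longlonglongrightarrow> f"
    using dense_seq by blast
  have li: "liminf (\<lambda>n. ennreal ((norm (W (F n) z))\<^sup>2)) = ennreal ((norm (W f z))\<^sup>2)" for z
  proof (rule lim_imp_Liminf[OF trivial_limit_sequentially])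
    show "(\<lambda>n. ennreal ((norm (W (F n) z))\<^sup>2)) \<longlonglongrightarrow> ennreal ((norm (W f z))\<^sup>2)"
      by (intro tendsto_intros W_tendsto F(2))
  qed
  have "(\<integral>\<^sup>+ z. ennreal ((norm (W f z))\<^sup>2) \<partial>\<mu>) = (\<integral>\<^sup>+ z. liminf (\<lambda>n. ennreal ((norm (W (F n) z))\<^sup>2)) \<partial>\<mu>)"
    by (simp add: li)
  also have "\<dots> \<le> liminf (\<lambda>n. (\<integral>\<^sup>+ z. ennreal ((norm (W (F n) z))\<^sup>2) \<partial>\<mu>))"
    by (rule nn_integral_liminf) (rule W_meas)
  also have "\<dots> = liminf (\<lambda>n. ennreal ((norm (F n))\<^sup>2))"
    by (simp add: iso_span[OF F(1)])
  also have "\<dots> = ennreal ((norm f)\<^sup>2)"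
    by (rule lim_imp_Liminf[OF trivial_limit_sequentially]) (intro tendsto_intros F(2))
  finally show ?thesis .
qed

lemma lower: "ennreal ((norm f)\<^sup>2) \<le> 2 * (\<integral>\<^sup>+ z. ennreal ((norm (W f z))\<^sup>2) \<partial>\<mu>)"
proof -
  obtain F where F: "\<And>n. F n \<in> span (range (\<lambda>(a, b). tp a b))" "F \<longlonglongrightarrow> f"
    using dense_seq by blast
  let ?X = "\<integral>\<^sup>+ z. ennreal ((norm (W f z))\<^sup>2) \<partial>\<mu>"
  have le: "ennreal ((norm (F n))\<^sup>2) \<le> 2 * ?X + 2 * ennreal ((norm (F n - f))\<^sup>2)" for n
  proof -
    have "ennreal ((norm (F n))\<^sup>2) = (\<integral>\<^sup>+ z. ennreal ((norm (W (F n) z))\<^sup>2) \<partial>\<mu>)"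
      by (simp add: iso_span[OF F(1)])
    also have "\<dots> \<le> (\<integral>\<^sup>+ z. 2 * ennreal ((norm (W f z))\<^sup>2) + 2 * ennreal ((norm (W (F n - f) z))\<^sup>2) \<partial>\<mu>)"
    proof (rule nn_integral_mono)
      fix z
      have "W (F n) z = W f z + W (F n - f) z" using W_diff[of "F n" z f] by (simp add: algebra_simps)
      then show "ennreal ((norm (W (F n) z))\<^sup>2) \<le> 2 * ennreal ((norm (W f z))\<^sup>2) + 2 * ennreal ((norm (W (F n - f) z))\<^sup>2)"
        using ennsq_tri2 by metis
    qed
    also have "\<dots> = 2 * ?X + 2 * (\<integral>\<^sup>+ z. ennreal ((norm (W (F n - f) z))\<^sup>2) \<partial>\<mu>)"
      by (simp add: nn_integral_add2 nn_integral_cmult W_meas)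
    also have "\<dots> \<le> 2 * ?X + 2 * ennreal ((norm (F n - f))\<^sup>2)"
      by (intro add_left_mono mult_left_mono bessel) auto
    finally show ?thesis .
  qed
  have l1: "(\<lambda>n. ennreal ((norm (F n))\<^sup>2)) \<longlonglongrightarrow> ennreal ((norm f)\<^sup>2)"
    by (intro tendsto_intros F(2))
  have "(\<lambda>n. F n - f) \<longlonglongrightarrow> 0" using tendsto_diff[OF F(2) tendsto_const[of f]] by simp
  then have "(\<lambda>n. 2 * ?X + 2 * ennreal ((norm (F n - f))\<^sup>2)) \<longlonglongrightarrow> 2 * ?X + 2 * ennreal ((norm (0::'h))\<^sup>2)"
    by (intro tendsto_intros) auto
  then have l2: "(\<lambda>n. 2 * ?X + 2 * ennreal ((norm (F n - f))\<^sup>2)) \<longlonglongrightarrow> 2 * ?X" by simp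
  show ?thesis by (rule LIMSEQ_le[OF l1 l2]) (use le in auto)
qed

end

lemma ennreal_tendsto_0I:
  fixes X :: "nat \<Rightarrow> ennreal"
  assumes "\<And>e. 0 < e \<Longrightarrow> eventually (\<lambda>n. X n \<le> ennreal e) sequentially"
  shows "X \<longlonglongrightarrow> 0"
proof (rule order_tendstoI)
  fix a :: ennreal assume "a < 0" then show "eventually (\<lambda>n. a < X n) sequentially" by simp
next
  fix u :: ennreal assume u: "0 < u"
  obtain e where e: "0 < e" "ennreal e < u"
  proof (cases "u = \<infinity>")
    case True then show ?thesis using that[of 1] by simp
  next
    case False
    then obtain r where r: "u = ennreal r" "0 \<le> r" by (cases u) auto
    then have "0 < r" using u by simp
    then show ?thesis using that[of "r/2"] r by (simp add: ennreal_lessI)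
  qed
  show "eventually (\<lambda>n. X n < u) sequentially"
    using assms[OF e(1)] by eventually_elim (use e(2) in auto)
qed

lemma finite_points_net:
  fixes \<Phi> :: "'z \<Rightarrow> 'x \<Rightarrow> 'y::metric_space"
  assumes "finite Z"
    and tb: "\<And>z \<epsilon>. z \<in> Z \<Longrightarrow> 0 < \<epsilon> \<Longrightarrow> \<exists>k. finite k \<and> \<Phi> z ` K \<subseteq> (\<Union>y\<in>k. ball y \<epsilon>)"
  shows "\<forall>K'\<subseteq>K. \<forall>\<delta>>0. \<exists>k\<subseteq>K'. finite k \<and> (\<forall>f\<in>K'. \<exists>g\<in>k. \<forall>z\<in>Z. dist (\<Phi> z f) (\<Phi> z g) < \<delta>)"
  using assms(1) tb
proof (induction Z rule: finite_induct)
  case empty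
  show ?case
  proof (intro allI impI)
    fix K' :: "'x set" and \<delta> :: real assume "K' \<subseteq> K" "0 < \<delta>"
    show "\<exists>k\<subseteq>K'. finite k \<and> (\<forall>f\<in>K'. \<exists>g\<in>k. \<forall>z\<in>{}. dist (\<Phi> z f) (\<Phi> z g) < \<delta>)"
    proof (cases "K' = {}")
      case True then show ?thesis by auto
    next
      case False
      then obtain x where "x \<in> K'" by auto
      then show ?thesis by (intro exI[of _ "{x}"]) auto
    qed
  qed
next
  case (insert z0 Z)
  have IH: "\<forall>K'\<subseteq>K. \<forall>\<delta>>0. \<exists>k\<subseteq>K'. finite k \<and> (\<forall>f\<in>K'. \<exists>g\<in>k. \<forall>z\<in>Z. dist (\<Phi> z f) (\<Phi> z g) < \<delta>)"
  proof (rule insert.IH)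
    fix z \<epsilon> assume "z \<in> Z" "(0::real) < \<epsilon>"
    then show "\<exists>k. finite k \<and> \<Phi> z ` K \<subseteq> (\<Union>y\<in>k. ball y \<epsilon>)"
      using insert.prems[of z \<epsilon>] by simp
  qed
  show ?case
  proof (intro allI impI)
    fix K' :: "'x set" and \<delta> :: real assume K': "K' \<subseteq> K" and d: "0 < \<delta>"
    obtain Y where Y: "finite Y" "\<Phi> z0 ` K \<subseteq> (\<Union>y\<in>Y. ball y (\<delta>/2))"
      using insert.prems[of z0 "\<delta>/2"] d by auto
    define Ks where "Ks y = {f\<in>K'. dist y (\<Phi> z0 f) < \<delta>/2}" for y
    have "\<forall>y\<in>Y. \<exists>k\<subseteq>Ks y. finite k \<and> (\<forall>f\<in>Ks y. \<exists>g\<in>k. \<forall>z\<in>Z. dist (\<Phi> z f) (\<Phi> z g) < \<delta>)"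
    proof
      fix y assume "y \<in> Y"
      have "Ks y \<subseteq> K" using K' by (auto simp: Ks_def)
      then show "\<exists>k\<subseteq>Ks y. finite k \<and> (\<forall>f\<in>Ks y. \<exists>g\<in>k. \<forall>z\<in>Z. dist (\<Phi> z f) (\<Phi> z g) < \<delta>)"
        using IH d by blast
    qed
    from bchoice[OF this] obtain kk where kk0: "\<forall>y\<in>Y. kk y \<subseteq> Ks y \<and> finite (kk y) \<and> (\<forall>f\<in>Ks y. \<exists>g\<in>kk y. \<forall>z\<in>Z. dist (\<Phi> z f) (\<Phi> z g) < \<delta>)" ..
    then have kk: "\<And>y. y \<in> Y \<Longrightarrow> kk y \<subseteq> Ks y \<and> finite (kk y) \<and> (\<forall>f\<in>Ks y. \<exists>g\<in>kk y. \<forall>z\<in>Z. dist (\<Phi> z f) (\<Phi> z g) < \<delta>)"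
      by blast
    show "\<exists>k\<subseteq>K'. finite k \<and> (\<forall>f\<in>K'. \<exists>g\<in>k. \<forall>z\<in>insert z0 Z. dist (\<Phi> z f) (\<Phi> z g) < \<delta>)"
    proof (intro exI conjI)
      show "(\<Union>y\<in>Y. kk y) \<subseteq> K'" using kk by (auto simp: Ks_def)
      show "finite (\<Union>y\<in>Y. kk y)" using kk Y(1) by auto
      show "\<forall>f\<in>K'. \<exists>g\<in>(\<Union>y\<in>Y. kk y). \<forall>z\<in>insert z0 Z. dist (\<Phi> z f) (\<Phi> z g) < \<delta>"
      proof
        fix f assume f: "f \<in> K'"
        then have "\<Phi> z0 f \<in> \<Phi> z0 ` K" using K' by auto
        then have "\<Phi> z0 f \<in> (\<Union>y\<in>Y. ball y (\<delta>/2))" by (rule subsetD[OF Y(2)])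
        then obtain y where y: "y \<in> Y" "dist y (\<Phi> z0 f) < \<delta>/2" by (auto simp del: dist_commute)
        then have "f \<in> Ks y" using f by (simp add: Ks_def)
        then obtain g where g: "g \<in> kk y" "\<forall>z\<in>Z. dist (\<Phi> z f) (\<Phi> z g) < \<delta>" using kk[OF y(1)] by blast
        have "g \<in> Ks y" using g(1) kk[OF y(1)] by blast
        then have "dist y (\<Phi> z0 g) < \<delta>/2" by (simp add: Ks_def)
        then have "dist (\<Phi> z0 f) (\<Phi> z0 g) < \<delta>"
          using y(2) dist_triangle[of "\<Phi> z0 f" "\<Phi> z0 g" y] by (simp add: dist_commute)
        then show "\<exists>g\<in>(\<Union>y\<in>Y. kk y). \<forall>z\<in>insert z0 Z. dist (\<Phi> z f) (\<Phi> z g) < \<delta>"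
          using g y(1) by blast
      qed
    qed
  qed
qed

lemma tb_imp_compact_closure:
  fixes K :: "'a::{real_normed_vector,complete_space} set"
  assumes "\<And>e. 0 < e \<Longrightarrow> \<exists>k. finite k \<and> K \<subseteq> (\<Union>x\<in>k. ball x e)"
  shows "compact (closure K)"
  unfolding compact_eq_totally_bounded
proof (intro conjI allI impI)
  show "complete (closure K)" by (simp add: complete_eq_closed)
  fix e :: real assume e: "0 < e"
  obtain k where k: "finite k" "K \<subseteq> (\<Union>x\<in>k. ball x (e/2))" using assms[of "e/2"] e by auto
  have "closure K \<subseteq> (\<Union>x\<in>k. cball x (e/2))"
  proof (rule closure_minimal)
    have "(\<Union>x\<in>k. ball x (e/2)) \<subseteq> (\<Union>x\<in>k. cball x (e/2))"
      by (intro UN_mono order_refl ball_subset_cball)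
    then show "K \<subseteq> (\<Union>x\<in>k. cball x (e/2))" using k(2) by (rule subset_trans[rotated])
    show "closed (\<Union>x\<in>k. cball x (e/2))" using k(1) by (intro closed_UN) auto
  qed
  also have "\<dots> \<subseteq> (\<Union>x\<in>k. ball x e)"
  proof (intro UN_mono order_refl)
    fix x show "cball x (e/2) \<subseteq> ball x e" using e by (auto simp: subset_iff)
  qed
  finally show "\<exists>k. finite k \<and> closure K \<subseteq> (\<Union>x\<in>k. ball x e)" using k(1) by blast
qed

lemma compact_closure_tb:
  fixes S :: "'a::metric_space set"
  assumes "compact (closure S)" "0 < e"
  shows "\<exists>k. finite k \<and> S \<subseteq> (\<Union>x\<in>k. ball x e)"
proof -
  have "\<forall>\<epsilon>>0. \<exists>k. finite k \<and> closure S \<subseteq> (\<Union>x\<in>k. ball x \<epsilon>)"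
    using assms(1) unfolding compact_eq_totally_bounded by (rule conjunct2)
  then obtain k where k: "finite k" "closure S \<subseteq> (\<Union>x\<in>k. ball x e)" using assms(2) by blast
  have "S \<subseteq> (\<Union>x\<in>k. ball x e)" using closure_subset k(2) by (rule subset_trans)
  then show ?thesis using k(1) by blast
qed

context ws begin

lemma W_meas_ind: "A \<in> sets borel \<Longrightarrow> (\<lambda>z. ennreal ((norm (W f z))\<^sup>2) * indicator A z) \<in> borel_measurable \<mu>"
proof -
  assume "A \<in> sets borel"
  then have "A \<in> sets \<mu>" using sets_mu by simp
  then show ?thesis by (rule borel_measurable_times_ennreal[OF W_meas borel_measurable_indicator])
qed

lemma W_meas_ind2: "A \<in> sets borel \<Longrightarrow> (\<lambda>z. 2 * (ennreal ((norm (W f z))\<^sup>2) * indicator A z)) \<in> borel_measurable \<mu>"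
  by (rule borel_measurable_times_ennreal[OF borel_measurable_const W_meas_ind])

lemma set_add2:
  assumes A: "A \<in> sets borel"
  shows "(\<integral>\<^sup>+ z. 2 * (ennreal ((norm (W f z))\<^sup>2) * indicator A z) + 2 * (ennreal ((norm (W g z))\<^sup>2) * indicator A z) \<partial>\<mu>)
   = 2 * (\<integral>\<^sup>+ z. ennreal ((norm (W f z))\<^sup>2) * indicator A z \<partial>\<mu>) + 2 * (\<integral>\<^sup>+ z. ennreal ((norm (W g z))\<^sup>2) * indicator A z \<partial>\<mu>)"
  by (simp add: nn_integral_add[OF W_meas_ind2[OF A] W_meas_ind2[OF A]] nn_integral_cmult[OF W_meas_ind[OF A]])

lemma tail_tri_add:
  assumes A: "A \<in> sets borel"
  shows "(\<integral>\<^sup>+ z. ennreal ((norm (W f z))\<^sup>2) * indicator A z \<partial>\<mu>)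
    \<le> 2 * (\<integral>\<^sup>+ z. ennreal ((norm (W g z))\<^sup>2) * indicator A z \<partial>\<mu>) + 2 * (\<integral>\<^sup>+ z. ennreal ((norm (W (f - g) z))\<^sup>2) * indicator A z \<partial>\<mu>)"
proof -
  have "(\<integral>\<^sup>+ z. ennreal ((norm (W f z))\<^sup>2) * indicator A z \<partial>\<mu>)
     \<le> (\<integral>\<^sup>+ z. 2 * (ennreal ((norm (W g z))\<^sup>2) * indicator A z) + 2 * (ennreal ((norm (W (f - g) z))\<^sup>2) * indicator A z) \<partial>\<mu>)"
  proof (rule nn_integral_mono)
    fix z
    have "W f z = W g z + W (f - g) z" using W_diff[of f z g] by (simp add: algebra_simps)
    then have "ennreal ((norm (W f z))\<^sup>2) \<le> 2 * ennreal ((norm (W g z))\<^sup>2) + 2 * ennreal ((norm (W (f - g) z))\<^sup>2)"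
      using ennsq_tri2 by metis
    then show "ennreal ((norm (W f z))\<^sup>2) * indicator A z \<le> 2 * (ennreal ((norm (W g z))\<^sup>2) * indicator A z) + 2 * (ennreal ((norm (W (f - g) z))\<^sup>2) * indicator A z)"
      by (cases "z \<in> A") auto
  qed
  also have "\<dots> = 2 * (\<integral>\<^sup>+ z. ennreal ((norm (W g z))\<^sup>2) * indicator A z \<partial>\<mu>) + 2 * (\<integral>\<^sup>+ z. ennreal ((norm (W (f - g) z))\<^sup>2) * indicator A z \<partial>\<mu>)"
    by (rule set_add2[OF A])
  finally show ?thesis .
qed

lemma tail_tri_diff:
  assumes A: "A \<in> sets borel"
  shows "(\<integral>\<^sup>+ z. ennreal ((norm (W (f - g) z))\<^sup>2) * indicator A z \<partial>\<mu>)
    \<le> 2 * (\<integral>\<^sup>+ z. ennreal ((norm (W f z))\<^sup>2) * indicator A z \<partial>\<mu>) + 2 * (\<integral>\<^sup>+ z. ennreal ((norm (W g z))\<^sup>2) * indicator A z \<partial>\<mu>)"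
proof -
  have "(\<integral>\<^sup>+ z. ennreal ((norm (W (f - g) z))\<^sup>2) * indicator A z \<partial>\<mu>)
     \<le> (\<integral>\<^sup>+ z. 2 * (ennreal ((norm (W f z))\<^sup>2) * indicator A z) + 2 * (ennreal ((norm (W g z))\<^sup>2) * indicator A z) \<partial>\<mu>)"
  proof (rule nn_integral_mono)
    fix z
    have "W (f - g) z = W f z + (- W g z)" using W_diff[of f z g] by (simp add: algebra_simps)
    then have "ennreal ((norm (W (f - g) z))\<^sup>2) \<le> 2 * ennreal ((norm (W f z))\<^sup>2) + 2 * ennreal ((norm (W g z))\<^sup>2)"
      using ennsq_tri2[of "W f z" "- W g z"] by simp
    then show "ennreal ((norm (W (f - g) z))\<^sup>2) * indicator A z \<le> 2 * (ennreal ((norm (W f z))\<^sup>2) * indicator A z) + 2 * (ennreal ((norm (W g z))\<^sup>2) * indicator A z)"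
      by (cases "z \<in> A") auto
  qed
  also have "\<dots> = 2 * (\<integral>\<^sup>+ z. ennreal ((norm (W f z))\<^sup>2) * indicator A z \<partial>\<mu>) + 2 * (\<integral>\<^sup>+ z. ennreal ((norm (W g z))\<^sup>2) * indicator A z \<partial>\<mu>)"
    by (rule set_add2[OF A])
  finally show ?thesis .
qed

lemma set_le_full: "(\<integral>\<^sup>+ z. ennreal ((norm (W f z))\<^sup>2) * indicator A z \<partial>\<mu>) \<le> (\<integral>\<^sup>+ z. ennreal ((norm (W f z))\<^sup>2) \<partial>\<mu>)"
  by (rule nn_integral_mono) (simp add: indicator_def)

lemma split_int:
  assumes A: "A \<in> sets borel"
  shows "(\<integral>\<^sup>+ z. ennreal ((norm (W f z))\<^sup>2) \<partial>\<mu>) = (\<integral>\<^sup>+ z. ennreal ((norm (W f z))\<^sup>2) * indicator A z \<partial>\<mu>) + (\<integral>\<^sup>+ z. ennreal ((norm (W f z))\<^sup>2) * indicator (UNIV - A) z \<partial>\<mu>)"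
proof -
  have A': "UNIV - A \<in> sets borel" using A by auto
  have "(\<integral>\<^sup>+ z. ennreal ((norm (W f z))\<^sup>2) \<partial>\<mu>) = (\<integral>\<^sup>+ z. ennreal ((norm (W f z))\<^sup>2) * indicator A z + ennreal ((norm (W f z))\<^sup>2) * indicator (UNIV - A) z \<partial>\<mu>)"
    by (rule nn_integral_cong) (simp add: indicator_def)
  also have "\<dots> = (\<integral>\<^sup>+ z. ennreal ((norm (W f z))\<^sup>2) * indicator A z \<partial>\<mu>) + (\<integral>\<^sup>+ z. ennreal ((norm (W f z))\<^sup>2) * indicator (UNIV - A) z \<partial>\<mu>)"
    by (rule nn_integral_add[OF W_meas_ind[OF A] W_meas_ind[OF A']])
  finally show ?thesis .
qed

lemma set_bound:
  assumes A: "A \<in> sets borel" and c: "\<And>z. z \<in> A \<Longrightarrow> norm (W f z) \<le> c"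
  shows "(\<integral>\<^sup>+ z. ennreal ((norm (W f z))\<^sup>2) * indicator A z \<partial>\<mu>) \<le> ennreal (c\<^sup>2) * emeasure \<mu> A"
proof -
  have "(\<integral>\<^sup>+ z. ennreal ((norm (W f z))\<^sup>2) * indicator A z \<partial>\<mu>) \<le> (\<integral>\<^sup>+ z. ennreal (c\<^sup>2) * indicator A z \<partial>\<mu>)"
  proof (rule nn_integral_mono)
    fix z show "ennreal ((norm (W f z))\<^sup>2) * indicator A z \<le> ennreal (c\<^sup>2) * indicator A z"
    proof (cases "z \<in> A")
      case True
      then have "norm (W f z) \<le> c" by (rule c)
      then have "(norm (W f z))\<^sup>2 \<le> c\<^sup>2" by (rule power_mono) simp
      then show ?thesis using True by (simp add: ennreal_leI)
    qed simp
  qed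
  also have "\<dots> = ennreal (c\<^sup>2) * emeasure \<mu> A"
    by (rule nn_integral_cmult_indicator) (simp add: sets_mu A)
  finally show ?thesis .
qed

lemma W_lip: "norm (W f z - W f z') \<le> norm f * norm (\<psi> z - \<psi> z')"
  unfolding W_def P_diff_g by (rule P_bound)

end

lemma two_enn: "0 \<le> (x::real) \<Longrightarrow> 2 * ennreal x = ennreal (2 * x)"
  using ennreal_mult[of 2 x] by simp

lemma enn_arith1: fixes c m eta :: real assumes "0 \<le> m" "0 \<le> eta"
  shows "2 * (ennreal (c\<^sup>2) * ennreal m + (2 * ennreal eta + 2 * ennreal eta)) = ennreal (2 * (c\<^sup>2 * m + (2*eta + 2*eta)))"
proof -
  have "ennreal (c\<^sup>2) * ennreal m = ennreal (c\<^sup>2 * m)" using ennreal_mult[of "c\<^sup>2" m] assms by simp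
  then show ?thesis using assms by (simp add: two_enn ennreal_plus[symmetric] del: ennreal_plus)
qed

lemma enn_arith2: fixes e :: real assumes "0 < e"
  shows "2 * ennreal (e/4) + 2 * ennreal (e/4) = ennreal e"
  using assms by (simp add: two_enn ennreal_plus[symmetric] del: ennreal_plus)

context ws begin

lemma E_le:
  assumes E_mono: "\<And>N. N \<ge> 1 \<Longrightarrow> E N \<subseteq> E (Suc N)" and "1 \<le> N" "N \<le> M"
  shows "E N \<subseteq> E M"
  using assms(3)
proof (induction M rule: dec_induct)
  case base then show ?case by simp
next
  case (step n)
  then show ?case using E_mono[of n] assms(2) by auto
qed

lemma tail_single:
  assumes E_open: "\<And>N. N \<ge> 1 \<Longrightarrow> open (E N)"
    and E_mono: "\<And>N. N \<ge> 1 \<Longrightarrow> E N \<subseteq> E (Suc N)"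
    and E_cover: "(\<Union>N\<in>{1..}. E N) = UNIV"
  shows "(\<lambda>N. \<integral>\<^sup>+ z. ennreal ((norm (W f z))\<^sup>2) * indicator (UNIV - E N) z \<partial>\<mu>) \<longlonglongrightarrow> 0"
proof -
  define u where "u i z = ennreal ((norm (W f z))\<^sup>2) * indicator (UNIV - E (Suc i)) z" for i z
  have sb: "UNIV - E (Suc i) \<in> sets borel" for i using E_open[of "Suc i"] by auto
  have meas: "u i \<in> borel_measurable \<mu>" for i unfolding u_def by (rule W_meas_ind[OF sb])
  have ule: "u (Suc i) z \<le> u i z" for i z
  proof -
    have "E (Suc i) \<subseteq> E (Suc (Suc i))" by (rule E_mono) simp
    then have "indicator (UNIV - E (Suc (Suc i))) z \<le> (indicator (UNIV - E (Suc i)) z :: ennreal)"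
      by (auto simp: indicator_def)
    then show ?thesis unfolding u_def by (rule mult_left_mono) simp
  qed
  have dec: "decseq u" by (rule decseq_SucI) (simp add: le_fun_def ule)
  have fin: "(\<integral>\<^sup>+ z. u i z \<partial>\<mu>) < \<infinity>" for i
  proof -
    have "(\<integral>\<^sup>+ z. u i z \<partial>\<mu>) \<le> (\<integral>\<^sup>+ z. ennreal ((norm (W f z))\<^sup>2) \<partial>\<mu>)"
      unfolding u_def by (rule set_le_full)
    also have "\<dots> \<le> ennreal ((norm f)\<^sup>2)" by (rule bessel)
    finally show ?thesis by (simp add: le_less_trans)
  qed
  have inf0: "(INF i. u i z) = 0" for z
  proof -
    obtain N where N: "N \<ge> 1" "z \<in> E N" using E_cover by blast
    have "E N \<subseteq> E (Suc N)" by (rule E_mono[OF N(1)])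
    then have "u N z = 0" using N(2) by (auto simp: u_def)
    then have "(INF i. u i z) \<le> 0" by (metis INF_lower UNIV_I)
    then show ?thesis by simp
  qed
  have "(INF i. (\<integral>\<^sup>+ z. u i z \<partial>\<mu>)) = (\<integral>\<^sup>+ z. (INF i. u i z) \<partial>\<mu>)"
    by (rule nn_integral_monotone_convergence_INF_decseq[symmetric, OF dec meas fin])
  also have "\<dots> = 0" by (simp add: inf0)
  finally have i0: "(INF i. (\<integral>\<^sup>+ z. u i z \<partial>\<mu>)) = 0" .
  have "decseq (\<lambda>i. \<integral>\<^sup>+ z. u i z \<partial>\<mu>)"
    by (rule decseq_SucI) (rule nn_integral_mono, rule ule)
  then have "(\<lambda>i. \<integral>\<^sup>+ z. u i z \<partial>\<mu>) \<longlonglongrightarrow> 0" using LIMSEQ_INF i0 by metis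
  then have "(\<lambda>i. \<integral>\<^sup>+ z. ennreal ((norm (W f z))\<^sup>2) * indicator (UNIV - E (Suc i)) z \<partial>\<mu>) \<longlonglongrightarrow> 0"
    by (simp add: u_def)
  then show ?thesis by (rule LIMSEQ_imp_Suc)
qed

lemma fwd_pw:
  assumes "compact (closure K)"
  shows "compact (closure ((\<lambda>f. W f z) ` K))"
proof -
  have cont: "continuous_on UNIV (\<lambda>f. W f z)"
    unfolding W_def by (rule linear_continuous_on[OF P_bl])
  have c: "compact ((\<lambda>f. W f z) ` closure K)"
    by (rule compact_continuous_image[OF continuous_on_subset[OF cont] assms]) simp
  have sub: "closure ((\<lambda>f. W f z) ` K) \<subseteq> (\<lambda>f. W f z) ` closure K"
    by (rule closure_minimal) (use closure_subset compact_imp_closed[OF c] in auto)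
  have "compact ((\<lambda>f. W f z) ` closure K \<inter> closure ((\<lambda>f. W f z) ` K))"
    by (rule compact_Int_closed[OF c closed_closure])
  also have "(\<lambda>f. W f z) ` closure K \<inter> closure ((\<lambda>f. W f z) ` K) = closure ((\<lambda>f. W f z) ` K)"
    using sub by blast
  finally show ?thesis .
qed

lemma fwd_tail:
  assumes cK: "compact (closure K)"
    and E_open: "\<And>N. N \<ge> 1 \<Longrightarrow> open (E N)"
    and E_mono: "\<And>N. N \<ge> 1 \<Longrightarrow> E N \<subseteq> E (Suc N)"
    and E_cover: "(\<Union>N\<in>{1..}. E N) = UNIV"
  shows "(\<lambda>N. SUP f\<in>K. \<integral>\<^sup>+ z. ennreal ((norm (W f z))\<^sup>2) * indicator (UNIV - E N) z \<partial>\<mu>) \<longlonglongrightarrow> 0"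
proof (rule ennreal_tendsto_0I)
  fix e :: real assume e: "0 < e"
  have e4: "0 < ennreal (e/4)" using e by simp
  define d where "d = sqrt (e/4)"
  have d: "0 < d" "d\<^sup>2 = e/4" using e by (auto simp: d_def)
  obtain k where k: "finite k" "K \<subseteq> (\<Union>x\<in>k. ball x d)" using compact_closure_tb[OF cK d(1)] by blast
  have "\<forall>x\<in>k. eventually (\<lambda>N. (\<integral>\<^sup>+ z. ennreal ((norm (W x z))\<^sup>2) * indicator (UNIV - E N) z \<partial>\<mu>) < ennreal (e/4)) sequentially"
  proof
    fix x assume "x \<in> k"
    show "eventually (\<lambda>N. (\<integral>\<^sup>+ z. ennreal ((norm (W x z))\<^sup>2) * indicator (UNIV - E N) z \<partial>\<mu>) < ennreal (e/4)) sequentially"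
    proof (rule order_tendstoD(2)[OF _ e4])
      show "(\<lambda>N. \<integral>\<^sup>+ z. ennreal ((norm (W x z))\<^sup>2) * indicator (UNIV - E N) z \<partial>\<mu>) \<longlonglongrightarrow> 0"
        by (rule tail_single) (use E_open E_mono E_cover in auto)
    qed
  qed
  then have ev: "eventually (\<lambda>N. \<forall>x\<in>k. (\<integral>\<^sup>+ z. ennreal ((norm (W x z))\<^sup>2) * indicator (UNIV - E N) z \<partial>\<mu>) < ennreal (e/4)) sequentially"
    by (rule eventually_ball_finite[OF k(1)])
  have ev1: "eventually (\<lambda>N. 1 \<le> N) sequentially" by (rule eventually_ge_at_top)
  show "eventually (\<lambda>N. (SUP f\<in>K. \<integral>\<^sup>+ z. ennreal ((norm (W f z))\<^sup>2) * indicator (UNIV - E N) z \<partial>\<mu>) \<le> ennreal e) sequentially"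
    using ev ev1
  proof eventually_elim
    case (elim N)
    have sb: "UNIV - E N \<in> sets borel" using E_open[OF elim(2)] by auto
    show ?case
    proof (rule SUP_least)
      fix f assume "f \<in> K"
      then obtain x where x: "x \<in> k" "dist x f < d" using k(2) by auto
      have "(\<integral>\<^sup>+ z. ennreal ((norm (W f z))\<^sup>2) * indicator (UNIV - E N) z \<partial>\<mu>)
          \<le> 2 * (\<integral>\<^sup>+ z. ennreal ((norm (W x z))\<^sup>2) * indicator (UNIV - E N) z \<partial>\<mu>) + 2 * (\<integral>\<^sup>+ z. ennreal ((norm (W (f - x) z))\<^sup>2) * indicator (UNIV - E N) z \<partial>\<mu>)"
        by (rule tail_tri_add[OF sb])
      also have "\<dots> \<le> 2 * ennreal (e/4) + 2 * ennreal (e/4)"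
      proof (intro add_mono mult_left_mono)
        show "(\<integral>\<^sup>+ z. ennreal ((norm (W x z))\<^sup>2) * indicator (UNIV - E N) z \<partial>\<mu>) \<le> ennreal (e/4)"
          using elim(1) x(1) by (simp add: less_imp_le)
        have "(\<integral>\<^sup>+ z. ennreal ((norm (W (f - x) z))\<^sup>2) * indicator (UNIV - E N) z \<partial>\<mu>) \<le> (\<integral>\<^sup>+ z. ennreal ((norm (W (f - x) z))\<^sup>2) \<partial>\<mu>)"
          by (rule set_le_full)
        also have "\<dots> \<le> ennreal ((norm (f - x))\<^sup>2)" by (rule bessel)
        also have "\<dots> \<le> ennreal (e/4)"
        proof (rule ennreal_leI)
          have "norm (f - x) \<le> d" using x(2) by (simp add: dist_norm norm_minus_commute)
          then have "(norm (f - x))\<^sup>2 \<le> d\<^sup>2" by (rule power_mono) simp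
          then show "(norm (f - x))\<^sup>2 \<le> e/4" using d(2) by simp
        qed
        finally show "(\<integral>\<^sup>+ z. ennreal ((norm (W (f - x) z))\<^sup>2) * indicator (UNIV - E N) z \<partial>\<mu>) \<le> ennreal (e/4)" .
      qed auto
      also have "\<dots> = ennreal e" by (rule enn_arith2[OF e])
      finally show "(\<integral>\<^sup>+ z. ennreal ((norm (W f z))\<^sup>2) * indicator (UNIV - E N) z \<partial>\<mu>) \<le> ennreal e" .
    qed
  qed
qed

end

context ws begin

lemma bwd:
  assumes pw: "\<forall>z. compact (closure ((\<lambda>f. W f z) ` K))"
    and lim: "(\<lambda>N. SUP f\<in>K. \<integral>\<^sup>+ z. ennreal ((norm (W f z))\<^sup>2) * indicator (UNIV - E N) z \<partial>\<mu>) \<longlonglongrightarrow> 0"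
    and E_open: "\<And>N. N \<ge> 1 \<Longrightarrow> open (E N)"
    and E_pc: "\<And>N. N \<ge> 1 \<Longrightarrow> compact (closure (E N))"
    and fin: "\<And>C. compact C \<Longrightarrow> emeasure \<mu> C < \<infinity>"
    and Kb: "bounded K"
  shows "compact (closure K)"
proof -
  obtain M where M: "0 < M" "\<And>f. f \<in> K \<Longrightarrow> norm f \<le> M" using Kb unfolding bounded_pos by blast
  show ?thesis
  proof (rule tb_imp_compact_closure)
    fix e :: real assume e: "0 < e"
    define \<eta> where "\<eta> = e\<^sup>2 / 32"
    have eta: "0 < \<eta>" using e by (simp add: \<eta>_def)
    have "eventually (\<lambda>N. (SUP f\<in>K. \<integral>\<^sup>+ z. ennreal ((norm (W f z))\<^sup>2) * indicator (UNIV - E N) z \<partial>\<mu>) < ennreal \<eta>) sequentially"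
      by (rule order_tendstoD(2)[OF lim]) (simp add: eta)
    moreover have "eventually (\<lambda>N. 1 \<le> N) sequentially" by (rule eventually_ge_at_top)
    ultimately have "eventually (\<lambda>N. 1 \<le> N \<and> (SUP f\<in>K. \<integral>\<^sup>+ z. ennreal ((norm (W f z))\<^sup>2) * indicator (UNIV - E N) z \<partial>\<mu>) < ennreal \<eta>) sequentially"
      by (rule eventually_conj[rotated])
    then obtain N where N: "1 \<le> N" "(SUP f\<in>K. \<integral>\<^sup>+ z. ennreal ((norm (W f z))\<^sup>2) * indicator (UNIV - E N) z \<partial>\<mu>) < ennreal \<eta>"
      unfolding eventually_sequentially by blast
    have tailK: "(\<integral>\<^sup>+ z. ennreal ((norm (W f z))\<^sup>2) * indicator (UNIV - E N) z \<partial>\<mu>) \<le> ennreal \<eta>" if "f \<in> K" for f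
    proof -
      have "(\<integral>\<^sup>+ z. ennreal ((norm (W f z))\<^sup>2) * indicator (UNIV - E N) z \<partial>\<mu>) \<le> (SUP f\<in>K. \<integral>\<^sup>+ z. ennreal ((norm (W f z))\<^sup>2) * indicator (UNIV - E N) z \<partial>\<mu>)"
        using that by (rule SUP_upper)
      then show ?thesis using N(2) by simp
    qed
    define C where "C = closure (E N)"
    have cC: "compact C" unfolding C_def by (rule E_pc[OF N(1)])
    have CB: "C \<in> sets borel" unfolding C_def by simp
    have EB: "E N \<in> sets borel" using E_open[OF N(1)] by simp
    have finC: "emeasure \<mu> C < \<infinity>" by (rule fin[OF cC])
    define mr where "mr = enn2real (emeasure \<mu> C)"
    have mr: "emeasure \<mu> C = ennreal mr" "0 \<le> mr" using finC by (auto simp: mr_def)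
    have mE: "emeasure \<mu> (E N) \<le> ennreal mr"
      unfolding mr(1)[symmetric] by (rule emeasure_mono) (auto simp: C_def closure_subset sets_mu CB)
    define c0 where "c0 = e / sqrt (8 * (mr + 1))"
    have c0: "0 < c0" using e mr(2) by (simp add: c0_def)
    have c0sq: "c0\<^sup>2 * (mr + 1) = e\<^sup>2 / 8"
      using mr(2) by (simp add: c0_def power_divide field_simps)
    have c0m: "c0\<^sup>2 * mr \<le> e\<^sup>2 / 8"
    proof -
      have "c0\<^sup>2 * mr \<le> c0\<^sup>2 * (mr + 1)" by (rule mult_left_mono) auto
      then show ?thesis using c0sq by linarith
    qed
    define \<delta> where "\<delta> = c0 / 2"
    define \<delta>' where "\<delta>' = c0 / (4 * M)"
    have dpos: "0 < \<delta>" "0 < \<delta>'" using c0 M(1) by (auto simp: \<delta>_def \<delta>'_def)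
    have Md: "M * \<delta>' = c0 / 4" using M(1) by (simp add: \<delta>'_def)
    define U where "U z = {y. dist (\<psi> y) (\<psi> z) < \<delta>'}" for z
    have Uo: "open (U z)" for z
      unfolding U_def by (rule open_Collect_less) (intro continuous_intros psi_cont)+
    have "C \<subseteq> (\<Union>z\<in>C. U z)" using dpos by (auto simp: U_def)
    then obtain Z where Z: "Z \<subseteq> C" "finite Z" "C \<subseteq> (\<Union>z\<in>Z. U z)"
      using compactE_image[OF cC, of C U] Uo by blast
    have net: "\<forall>K'\<subseteq>K. \<forall>\<delta>>0. \<exists>k\<subseteq>K'. finite k \<and> (\<forall>f\<in>K'. \<exists>g\<in>k. \<forall>z\<in>Z. dist (W f z) (W g z) < \<delta>)"
    proof (rule finite_points_net[OF Z(2)])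
      fix z and \<epsilon> :: real assume "z \<in> Z" and ep: "0 < \<epsilon>"
      show "\<exists>k. finite k \<and> (\<lambda>f. W f z) ` K \<subseteq> (\<Union>y\<in>k. ball y \<epsilon>)"
        by (rule compact_closure_tb[OF pw[rule_format] ep])
    qed
    have "\<exists>k\<subseteq>K. finite k \<and> (\<forall>f\<in>K. \<exists>g\<in>k. \<forall>z\<in>Z. dist (W f z) (W g z) < \<delta>)"
      by (rule net[rule_format, OF order_refl dpos(1)])
    then obtain k where k: "k \<subseteq> K" "finite k" "\<forall>f\<in>K. \<exists>g\<in>k. \<forall>z\<in>Z. dist (W f z) (W g z) < \<delta>"
      by blast
    show "\<exists>k. finite k \<and> K \<subseteq> (\<Union>x\<in>k. ball x e)"
    proof (intro exI conjI)
      show "finite k" by (rule k(2))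
      show "K \<subseteq> (\<Union>x\<in>k. ball x e)"
      proof
        fix f assume f: "f \<in> K"
        then obtain g where g: "g \<in> k" "\<forall>z\<in>Z. dist (W f z) (W g z) < \<delta>" using k(3) by blast
        have gK: "g \<in> K" using g(1) k(1) by blast
        have unif: "norm (W (f - g) z) \<le> c0" if z: "z \<in> E N" for z
        proof -
          have "z \<in> C" using z closure_subset by (auto simp: C_def)
          then obtain zj where zj: "zj \<in> Z" "z \<in> U zj" using Z(3) by blast
          have pz: "norm (\<psi> z - \<psi> zj) \<le> \<delta>'" using zj(2) by (simp add: U_def dist_norm)
          have a1: "norm (W f z - W f zj) \<le> c0 / 4"
          proof -
            have "norm (W f z - W f zj) \<le> norm f * norm (\<psi> z - \<psi> zj)" by (rule W_lip)
            also have "\<dots> \<le> M * \<delta>'" by (rule mult_mono) (use M(2)[OF f] pz M(1) in auto)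
            finally show ?thesis using Md by simp
          qed
          have a3: "norm (W g zj - W g z) \<le> c0 / 4"
          proof -
            have "norm (W g zj - W g z) \<le> norm g * norm (\<psi> zj - \<psi> z)" by (rule W_lip)
            also have "\<dots> \<le> M * \<delta>'" by (rule mult_mono) (use M(2)[OF gK] pz M(1) in \<open>auto simp: norm_minus_commute\<close>)
            finally show ?thesis using Md by simp
          qed
          have a2: "norm (W f zj - W g zj) \<le> c0 / 2"
            using g(2) zj(1) by (auto simp: dist_norm \<delta>_def)
          have "W (f - g) z = (W f z - W f zj) + (W f zj - W g zj) + (W g zj - W g z)"
            using W_diff[of f z g] by (simp add: algebra_simps)
          then have "norm (W (f - g) z) = norm ((W f z - W f zj) + (W f zj - W g zj) + (W g zj - W g z))"
            by simp
          also have "\<dots> \<le> norm ((W f z - W f zj) + (W f zj - W g zj)) + norm (W g zj - W g z)"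
            by (rule norm_triangle_ineq)
          also have "\<dots> \<le> norm (W f z - W f zj) + norm (W f zj - W g zj) + norm (W g zj - W g z)"
            using norm_triangle_ineq[of "W f z - W f zj" "W f zj - W g zj"] by simp
          finally have "norm (W (f - g) z) \<le> norm (W f z - W f zj) + norm (W f zj - W g zj) + norm (W g zj - W g z)" .
          then show ?thesis using a1 a2 a3 by simp
        qed
        have inE: "(\<integral>\<^sup>+ z. ennreal ((norm (W (f - g) z))\<^sup>2) * indicator (E N) z \<partial>\<mu>) \<le> ennreal (c0\<^sup>2) * ennreal mr"
        proof -
          have "(\<integral>\<^sup>+ z. ennreal ((norm (W (f - g) z))\<^sup>2) * indicator (E N) z \<partial>\<mu>) \<le> ennreal (c0\<^sup>2) * emeasure \<mu> (E N)"
            by (rule set_bound[OF EB unif])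
          also have "\<dots> \<le> ennreal (c0\<^sup>2) * ennreal mr" by (rule mult_left_mono[OF mE]) simp
          finally show ?thesis .
        qed
        have outE: "(\<integral>\<^sup>+ z. ennreal ((norm (W (f - g) z))\<^sup>2) * indicator (UNIV - E N) z \<partial>\<mu>) \<le> 2 * ennreal \<eta> + 2 * ennreal \<eta>"
        proof -
          have "(\<integral>\<^sup>+ z. ennreal ((norm (W (f - g) z))\<^sup>2) * indicator (UNIV - E N) z \<partial>\<mu>)
              \<le> 2 * (\<integral>\<^sup>+ z. ennreal ((norm (W f z))\<^sup>2) * indicator (UNIV - E N) z \<partial>\<mu>) + 2 * (\<integral>\<^sup>+ z. ennreal ((norm (W g z))\<^sup>2) * indicator (UNIV - E N) z \<partial>\<mu>)"
            by (rule tail_tri_diff) (use EB in auto)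
          also have "\<dots> \<le> 2 * ennreal \<eta> + 2 * ennreal \<eta>"
            by (intro add_mono mult_left_mono tailK f gK) auto
          finally show ?thesis .
        qed
        have "ennreal ((norm (f - g))\<^sup>2) \<le> 2 * (\<integral>\<^sup>+ z. ennreal ((norm (W (f - g) z))\<^sup>2) \<partial>\<mu>)"
          by (rule lower)
        also have "(\<integral>\<^sup>+ z. ennreal ((norm (W (f - g) z))\<^sup>2) \<partial>\<mu>) = (\<integral>\<^sup>+ z. ennreal ((norm (W (f - g) z))\<^sup>2) * indicator (E N) z \<partial>\<mu>) + (\<integral>\<^sup>+ z. ennreal ((norm (W (f - g) z))\<^sup>2) * indicator (UNIV - E N) z \<partial>\<mu>)"
          by (rule split_int[OF EB])
        also have "2 * \<dots> \<le> 2 * (ennreal (c0\<^sup>2) * ennreal mr + (2 * ennreal \<eta> + 2 * ennreal \<eta>))"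
          by (intro mult_left_mono add_mono inE outE) auto
        also have "\<dots> = ennreal (2 * (c0\<^sup>2 * mr + (2 * \<eta> + 2 * \<eta>)))"
          by (rule enn_arith1[OF mr(2) less_imp_le[OF eta]])
        finally have "(norm (f - g))\<^sup>2 \<le> 2 * (c0\<^sup>2 * mr + (2 * \<eta> + 2 * \<eta>))"
          using mr(2) eta c0 by (subst (asm) ennreal_le_iff) (auto intro!: add_nonneg_nonneg)
        also have "\<dots> \<le> 2 * (e\<^sup>2 / 8 + e\<^sup>2 / 8)" using c0m by (simp add: \<eta>_def)
        also have "\<dots> < e\<^sup>2" using e by simp
        finally have "norm (f - g) < e"
          using e by (simp add: power_less_imp_less_base)
        then have "f \<in> ball g e" by (simp add: dist_norm norm_minus_commute)
        then show "f \<in> (\<Union>x\<in>k. ball x e)" using g(1) by blast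
      qed
    qed
  qed
qed

end

theorem proposition4p5:
  fixes sc1 :: "complex \<Rightarrow> 'a::{real_normed_vector,complete_space} \<Rightarrow> 'a"
    and sc2 :: "complex \<Rightarrow> 'b::{real_normed_vector,complete_space} \<Rightarrow> 'b"
    and scH :: "complex \<Rightarrow> 'h::{real_normed_vector,complete_space} \<Rightarrow> 'h"
    and ip1 :: "'a \<Rightarrow> 'a \<Rightarrow> complex"
    and ip2 :: "'b \<Rightarrow> 'b \<Rightarrow> complex"
    and ipH :: "'h \<Rightarrow> 'h \<Rightarrow> complex"
    and tp :: "'a \<Rightarrow> 'b \<Rightarrow> 'h"
    and \<mu> :: "'g::{topological_group_add,t2_space} measure"
    and E :: "nat \<Rightarrow> 'g set"
    and \<psi> :: "'g \<Rightarrow> 'b"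
    and K :: "'h set"
  assumes H1: "separable_hilbert sc1 ip1"
    and H2: "separable_hilbert sc2 ip2"
    and G_lc: "locally_compact_space (euclidean :: 'g topology)"
    and G_sep: "separable_space (euclidean :: 'g topology)"
    and haar: "left_haar_measure \<mu>"
    and E_open: "\<And>N. N \<ge> 1 \<Longrightarrow> open (E N)"
    and E_precompact: "\<And>N. N \<ge> 1 \<Longrightarrow> compact (closure (E N))"
    and E_mono: "\<And>N. N \<ge> 1 \<Longrightarrow> E N \<subseteq> E (Suc N)"
    and E_sym: "\<And>N. N \<ge> 1 \<Longrightarrow> uminus ` E N = E N"
    and E_mult: "\<And>N. N \<ge> 1 \<Longrightarrow> {x + y | x y. x \<in> E N \<and> y \<in> E N} \<subseteq> E (2 * N)"
    and E_cover: "(\<Union>N\<in>{1..}. E N) = UNIV"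
    and psi_bounded: "bounded (range \<psi>)"
    and psi_cont: "continuous_on UNIV \<psi>"
    and frame: "continuous_parseval_frame ip2 \<mu> \<psi>"
    and tensor: "hilbert_tensor_product sc1 sc2 scH ip1 ip2 ipH tp"
    and K_bounded: "bounded K"
  shows "compact (closure K) \<longleftrightarrow>
           ((\<forall>z. compact (closure ((\<lambda>f. wavelet_transform sc1 ip2 tp \<psi> f z) ` K))) \<and>
            (\<lambda>N. SUP f\<in>K. \<integral>\<^sup>+ z \<in> UNIV - E N. ennreal ((norm (wavelet_transform sc1 ip2 tp \<psi> f z))\<^sup>2) \<partial>\<mu>)
              \<longlonglongrightarrow> 0)"
proof -
  have c1: "complex_hilbert_ip sc1 ip1" using H1 by (simp add: separable_hilbert_def)
  have c2: "complex_hilbert_ip sc2 ip2" using H2 by (simp add: separable_hilbert_def)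
  have hs: "sets \<mu> = sets borel" using haar by (simp add: left_haar_measure_def)
  have fin: "\<And>C. compact C \<Longrightarrow> emeasure \<mu> C < \<infinity>" using haar by (simp add: left_haar_measure_def)
  interpret w: ws sc1 sc2 scH ip1 ip2 ipH tp \<mu> \<psi>
    by (rule ws.intro, rule ts.intro, rule c1, rule c2, rule tensor, rule ws_axioms.intro, rule hs, rule psi_cont, rule frame)
  have eqW: "\<And>f z. wavelet_transform sc1 ip2 tp \<psi> f z = w.W f z" by (rule w.W_eq)
  show ?thesis unfolding eqW
  proof
    assume cK: "compact (closure K)"
    show "(\<forall>z. compact (closure ((\<lambda>f. w.W f z) ` K))) \<and>
      (\<lambda>N. SUP f\<in>K. \<integral>\<^sup>+ z \<in> UNIV - E N. ennreal ((norm (w.W f z))\<^sup>2) \<partial>\<mu>) \<longlonglongrightarrow> 0"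
      using w.fwd_pw[OF cK] w.fwd_tail[OF cK E_open E_mono E_cover] by blast
  next
    assume a: "(\<forall>z. compact (closure ((\<lambda>f. w.W f z) ` K))) \<and>
      (\<lambda>N. SUP f\<in>K. \<integral>\<^sup>+ z \<in> UNIV - E N. ennreal ((norm (w.W f z))\<^sup>2) \<partial>\<mu>) \<longlonglongrightarrow> 0"
    show "compact (closure K)"
      by (rule w.bwd[OF conjunct1[OF a] conjunct2[OF a] E_open E_precompact fin K_bounded])
  qed
qed

end
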